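(* Let $\mathcal{S}$ be a square-free staged tree and let $\mathcal{S}'$ be the staged tree obtained from $\mathcal{S}$ by a swap operator $\tau$. Let $\alpha>0$, let $\mathcal{D}=(N_\lambda)_{\lambda\in\Lambda(\mathcal{S})}$ be a complete data sample on $\mathcal{S}$, and let $\mathcal{D}'$ be the sample on $\mathcal{S}'$ with $N'_{\varphi(\lambda)}=N_\lambda$, where $\varphi:\Lambda(\mathcal{S})\to\Lambda(\mathcal{S}')$ is the bijection of root-to-leaf paths induced by $\tau$. Then $\mathrm{BDepu}(\mathcal{S},\mathcal{D};\alpha)=\mathrm{BDepu}(\mathcal{S}',\mathcal{D}';\alpha)$.
   Context: An event tree is a finite directed rooted tree whose edges are directed away from the root; nodes with no outgoing edges are leaves, all other nodes are situations. A staged tree $\mathcal{S}$ is an event tree together with a partition of its situations into stages $u_1,\dots,u_J$ such that all situations in $u_j$ have the same number $r_j$ of outgoing edges, labelled $1,\dots,r_j$ at each situation of $u_j$; the $k$-th edge of every situation in $u_j$ carries the same conditional transition probability $\theta_{jk}$. A staged tree is square-free if no two situations on the same root-to-leaf path lie in the same stage. $\Lambda(\mathcal{S})$ is the set of root-to-leaf paths and, for an edge $e$, $\Lambda(e)$ is the set of root-to-leaf paths containing $e$. Twin and swap: a twin around a stage $u$ is a subtree rooted at a situation $s_0$ with outgoing edges $e_{01},\dots,e_{0r_1}$ to children $s_{01},\dots,s_{0r_1}$, all of which lie in the same stage $u$ (each with $r_2$ outgoing edges $e_{k1},\dots,e_{kr_2}$ to nodes $s_{kt}$, the subleaves of the twin),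 so that all root-to-subleaf paths have exactly two edges. The swap of this twin replaces it by a twin rooted at $s_0'$ (in the place of $s_0$) with $r_2$ outgoing edges to children $s'_1,\dots,s'_{r_2}$, each having $r_1$ outgoing edges, the $k$-th edge of $s'_t$ leading to the node $s_{kt}$ together with the whole part of the tree below $s_{kt}$ unchanged; the new root $s_0'$ takes the role of a situation of stage $u$ (its $t$-th edge carrying the parameter of the $t$-th edge of $u$), and the new children $s'_t$ are placed in the stage of $s_0$ (their $k$-th edge carrying the parameter of the $k$-th edge of $s_0$). This induces a bijection between root-to-leaf paths (the path through $e_{0k},e_{kt}$ corresponds to the path through the $t$-th root edge and the $k$-th edge of $s'_t$). A swap operator between staged trees is a finite composition of such swaps of single twins. A complete data sample $\mathcal{D}$ assigns to each root-to-leaf path $\lambda$ a number $N_\lambda\ge 0$ of units. For stage $u_j$, $n_{jk}$ is the number of units whose path passes through the $k$-th outgoing edge of some situation in $u_j$, $\overline{n}_j=\sum_k n_{jk}$. The BDepu score with imaginary sample size $\alpha>0$ is $$\mathrm{BDepu}(\mathcal{S},\mathcal{D};\alpha)=\prod_{j=1}^{J}\left[\frac{\Gamma(\overline{\alpha}_j)}{\Gamma(\overline{\alpha}_j+\overline{n}_j)}\prod_{k=1}^{r_j}\frac{\Gamma(\alpha_{jk}+n_{jk})}{\Gamma(\alpha_{jk})}\right],\quad \alpha_{jk}=\frac{\alpha}{|\Lambda(\mathcal{S})|}\sum_{m=1}^{h_j}|\Lambda(e^m_{jk})|,\quad \overline{\alpha}_j=\sum_{k=1}^{r_j}\alpha_{jk},$$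 where $h_j$ is the number of situations in $u_j$ and $e^m_{jk}$ is the $k$-th outgoing edge of the $m$-th situation of $u_j$. *)

theory Defs
  imports "HOL-Analysis.Analysis"
begin

text \<open>A node is either a leaf or a situation carrying its stage label
  and the ordered list of its children; the k-th child (0-based) is the target of the
  k-th outgoing edge. Stages are the classes of situations with the same label.
  Positions of nodes are lists of child indices (the root is []).\<close>

datatype 'a stree = Leaf | Sit 'a "'a stree list"

fun subtree :: "'a stree \<Rightarrow> nat list \<Rightarrow> 'a stree option" where
  "subtree t [] = Some t"
| "subtree Leaf (i # p) = None"
| "subtree (Sit u cs) (i # p) = (if i < length cs then subtree (cs ! i) p else None)"

definition staged_tree :: "'a stree \<Rightarrow> bool" where
  "staged_tree S \<longleftrightarrow>
     (\<forall>p u cs. subtree S p = Some (Sit u cs) \<longrightarrow> cs \<noteq> []) \<and>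
     (\<forall>p q u cs ds. subtree S p = Some (Sit u cs) \<longrightarrow> subtree S q = Some (Sit u ds)
        \<longrightarrow> length cs = length ds)"

definition square_free :: "'a stree \<Rightarrow> bool" where
  "square_free S \<longleftrightarrow>
     (\<forall>p r u cs ds. r \<noteq> [] \<longrightarrow> subtree S p = Some (Sit u cs) \<longrightarrow>
        subtree S (p @ r) = Some (Sit u ds) \<longrightarrow> False)"

text \<open>Root-to-leaf paths, identified with the positions of the leaves.\<close>
definition paths :: "'a stree \<Rightarrow> nat list set" where
  "paths S = {l. subtree S l = Some Leaf}"

definition stages :: "'a stree \<Rightarrow> 'a set" where
  "stages S = {u. \<exists>p cs. subtree S p = Some (Sit u cs)}"

definition sits_in :: "'a stree \<Rightarrow> 'a \<Rightarrow> nat list set" where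
  "sits_in S u = {p. \<exists>cs. subtree S p = Some (Sit u cs)}"

definition nch :: "'a stree \<Rightarrow> nat list \<Rightarrow> nat" where
  "nch S p = (case subtree S p of Some (Sit u cs) \<Rightarrow> length cs | _ \<Rightarrow> 0)"

definition stage_r :: "'a stree \<Rightarrow> 'a \<Rightarrow> nat" where
  "stage_r S u = nch S (SOME p. p \<in> sits_in S u)"

definition paths_edge :: "'a stree \<Rightarrow> nat list \<Rightarrow> nat \<Rightarrow> nat list set" where
  "paths_edge S p k = {l \<in> paths S. \<exists>q. l = p @ k # q}"

definition n_cnt :: "'a stree \<Rightarrow> (nat list \<Rightarrow> nat) \<Rightarrow> 'a \<Rightarrow> nat \<Rightarrow> real" where
  "n_cnt S N u k = (\<Sum>l\<in>{l \<in> paths S. \<exists>p\<in>sits_in S u. \<exists>q. l = p @ k # q}. real (N l))"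

definition alpha_jk :: "'a stree \<Rightarrow> real \<Rightarrow> 'a \<Rightarrow> nat \<Rightarrow> real" where
  "alpha_jk S \<alpha> u k = \<alpha> / real (card (paths S)) * (\<Sum>p\<in>sits_in S u. real (card (paths_edge S p k)))"

definition BDepu :: "'a stree \<Rightarrow> (nat list \<Rightarrow> nat) \<Rightarrow> real \<Rightarrow> real" where
  "BDepu S N \<alpha> = (\<Prod>u\<in>stages S.
      let r = stage_r S u;
          ab = (\<Sum>k<r. alpha_jk S \<alpha> u k);
          nb = (\<Sum>k<r. n_cnt S N u k)
      in Gamma ab / Gamma (ab + nb) *
         (\<Prod>k<r. Gamma (alpha_jk S \<alpha> u k + n_cnt S N u k) / Gamma (alpha_jk S \<alpha> u k)))"

fun kids :: "'a stree \<Rightarrow> 'a stree list" where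
  "kids Leaf = []"
| "kids (Sit u cs) = cs"

definition is_twin :: "'a stree \<Rightarrow> bool" where
  "is_twin t \<longleftrightarrow> (\<exists>v cs u r2. t = Sit v cs \<and> cs \<noteq> [] \<and>
      (\<forall>c\<in>set cs. \<exists>ds. c = Sit u ds \<and> length ds = r2))"

definition swap_twin :: "'a stree \<Rightarrow> 'a stree" where
  "swap_twin t = (case t of
      Sit v cs \<Rightarrow> (case hd cs of
          Sit u ds0 \<Rightarrow> Sit u (map (\<lambda>i. Sit v (map (\<lambda>c. kids c ! i) cs)) [0..<length ds0])
        | Leaf \<Rightarrow> t)
    | Leaf \<Rightarrow> t)"

fun upd_at :: "nat list \<Rightarrow> ('a stree \<Rightarrow> 'a stree) \<Rightarrow> 'a stree \<Rightarrow> 'a stree" where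
  "upd_at [] f t = f t"
| "upd_at (i # p) f Leaf = Leaf"
| "upd_at (i # p) f (Sit u cs) =
     (if i < length cs then Sit u (cs[i := upd_at p f (cs ! i)]) else Sit u cs)"

text \<open>Path bijection induced by swapping the twin at position p:
  p @ k # t # rest  \<mapsto>  p @ t # k # rest; other paths unchanged.\<close>
definition swap_path :: "nat list \<Rightarrow> nat list \<Rightarrow> nat list" where
  "swap_path p l = (if (\<exists>k t q. l = p @ k # t # q)
     then p @ [l ! (length p + 1), l ! length p] @ drop (length p + 2) l else l)"

text \<open>A swap operator: a finite sequence of single-twin swaps at given positions.\<close>
fun valid_swaps :: "nat list list \<Rightarrow> 'a stree \<Rightarrow> bool" where
  "valid_swaps [] S = True"
| "valid_swaps (p # ps) S =
     ((\<exists>t. subtree S p = Some t \<and> is_twin t) \<and> valid_swaps ps (upd_at p swap_twin S))"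

fun swap_op :: "nat list list \<Rightarrow> 'a stree \<Rightarrow> 'a stree" where
  "swap_op [] S = S"
| "swap_op (p # ps) S = swap_op ps (upd_at p swap_twin S)"

fun swap_op_path :: "nat list list \<Rightarrow> nat list \<Rightarrow> nat list" where
  "swap_op_path [] l = l"
| "swap_op_path (p # ps) l = swap_op_path ps (swap_path p l)"

end

theory Submission
  imports Defs
begin

definition ni :: "'a stree \<Rightarrow> nat list \<Rightarrow> ('a \<times> nat) option option" where
  "ni S x = map_option (\<lambda>t. case t of Leaf \<Rightarrow> None | Sit u cs \<Rightarrow> Some (u, length cs)) (subtree S x)"

lemma subtree_append: "subtree t (x @ y) = Option.bind (subtree t x) (\<lambda>s. subtree s y)"
  by (induction t x rule: subtree.induct) auto

lemma ni_None_app: "ni S x = None \<Longrightarrow> ni S (x @ y) = None"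
  by (simp add: ni_def subtree_append)

lemma ni_leaf: "ni S x = Some None \<longleftrightarrow> subtree S x = Some Leaf"
  by (cases "subtree S x"; cases "the (subtree S x)") (auto simp: ni_def)

lemma ni_sit: "ni S x = Some (Some (u, n)) \<longleftrightarrow> (\<exists>cs. subtree S x = Some (Sit u cs) \<and> length cs = n)"
  by (cases "subtree S x"; cases "the (subtree S x)") (auto simp: ni_def)

lemma paths_ni: "paths S = {l. ni S l = Some None}"
  by (simp add: paths_def ni_leaf)

lemma sits_in_ni: "sits_in S w = {x. \<exists>n. ni S x = Some (Some (w, n))}"
  by (auto simp: sits_in_def ni_sit)

lemma stages_ni: "stages S = {w. \<exists>x n. ni S x = Some (Some (w, n))}"
  by (auto simp: stages_def ni_sit)

lemma nch_ni: "nch S x = (case ni S x of Some (Some (w, n)) \<Rightarrow> n | _ \<Rightarrow> 0)"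
  by (auto simp: nch_def ni_def split: stree.splits option.splits)

lemma square_free_ni: "square_free S \<longleftrightarrow>
   (\<forall>x r w n m. r \<noteq> [] \<longrightarrow> ni S x = Some (Some (w, n)) \<longrightarrow> ni S (x @ r) = Some (Some (w, m)) \<longrightarrow> False)"
  unfolding square_free_def ni_sit by blast

lemma staged_tree_ni: "staged_tree S \<longleftrightarrow>
   (\<forall>x w n. ni S x = Some (Some (w, n)) \<longrightarrow> n > 0) \<and>
   (\<forall>x y w n m. ni S x = Some (Some (w, n)) \<longrightarrow> ni S y = Some (Some (w, m)) \<longrightarrow> n = m)"
proof
  assume st: "staged_tree S"
  show "(\<forall>x w n. ni S x = Some (Some (w, n)) \<longrightarrow> n > 0) \<and>
   (\<forall>x y w n m. ni S x = Some (Some (w, n)) \<longrightarrow> ni S y = Some (Some (w, m)) \<longrightarrow> n = m)"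
  proof (intro conjI allI impI)
    fix x w n assume "ni S x = Some (Some (w, n))"
    then obtain cs where "subtree S x = Some (Sit w cs)" "length cs = n" by (auto simp: ni_sit)
    then show "n > 0" using st unfolding staged_tree_def by blast
  next
    fix x y w n m assume "ni S x = Some (Some (w, n))" "ni S y = Some (Some (w, m))"
    then obtain cs ds where "subtree S x = Some (Sit w cs)" "length cs = n"
      "subtree S y = Some (Sit w ds)" "length ds = m" by (auto simp: ni_sit)
    then show "n = m" using st unfolding staged_tree_def by blast
  qed
next
  assume h: "(\<forall>x w n. ni S x = Some (Some (w, n)) \<longrightarrow> n > 0) \<and>
   (\<forall>x y w n m. ni S x = Some (Some (w, n)) \<longrightarrow> ni S y = Some (Some (w, m)) \<longrightarrow> n = m)"
  have a: "ni S x = Some (Some (w, length cs))" if "subtree S x = Some (Sit w cs)" for x w cs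
    using that by (auto simp: ni_sit)
  show "staged_tree S" unfolding staged_tree_def
  proof (intro conjI allI impI)
    fix p u cs assume "subtree S p = Some (Sit u cs)"
    from a[OF this] h show "cs \<noteq> []" by auto
  next
    fix p q u cs ds assume "subtree S p = Some (Sit u cs)" "subtree S q = Some (Sit u ds)"
    from a[OF this(1)] a[OF this(2)] h show "length cs = length ds" by blast
  qed
qed

lemma finite_pos: "finite {x. subtree t x \<noteq> None}"
proof (induction t)
  case Leaf
  have "{x. subtree (Leaf::'a stree) x \<noteq> None} = {[]}"
    by (auto elim: subtree.elims)
  then show ?case by simp
next
  case (Sit u cs)
  have "{x. subtree (Sit u cs) x \<noteq> None} \<subseteq> {[]} \<union> (\<Union>i<length cs. (Cons i) ` {x. subtree (cs ! i) x \<noteq> None})"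
  proof
    fix x assume "x \<in> {x. subtree (Sit u cs) x \<noteq> None}"
    then show "x \<in> {[]} \<union> (\<Union>i<length cs. (Cons i) ` {x. subtree (cs ! i) x \<noteq> None})"
      by (cases x) (auto split: if_splits)
  qed
  moreover have "finite ({[]} \<union> (\<Union>i<length cs. (Cons i) ` {x. subtree (cs ! i) x \<noteq> None}))"
    using Sit by auto
  ultimately show ?case by (rule finite_subset)
qed

lemma finite_ni: "finite {x. ni S x \<noteq> None}"
  using finite_pos[of S] by (simp add: ni_def)

lemma finite_paths: "finite (paths S)"
  by (rule finite_subset[OF _ finite_ni[of S]]) (auto simp: paths_ni)

lemma finite_sits: "finite (sits_in S w)"
  by (rule finite_subset[OF _ finite_ni[of S]]) (auto simp: sits_in_ni)

lemma finite_stages: "finite (stages S)"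
proof -
  have "stages S \<subseteq> (\<lambda>x. fst (the (the (ni S x)))) ` {x. ni S x \<noteq> None}"
  proof
    fix w assume "w \<in> stages S"
    then obtain x n where "ni S x = Some (Some (w, n))" by (auto simp: stages_ni)
    then show "w \<in> (\<lambda>x. fst (the (the (ni S x)))) ` {x. ni S x \<noteq> None}"
      by (intro image_eqI[of _ _ x]) auto
  qed
  then show ?thesis using finite_ni finite_surj by blast
qed

lemma sf_D: "square_free S \<Longrightarrow> r \<noteq> [] \<Longrightarrow> ni S x = Some (Some (w, n)) \<Longrightarrow> ni S (x @ r) = Some (Some (w, m)) \<Longrightarrow> False"
  unfolding square_free_ni by blast

lemma app_cases: "p @ k # q = p' @ k' # q' \<Longrightarrow> (\<exists>r. p' = p @ r) \<or> (\<exists>r. p = p' @ r)"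
  by (auto simp: append_eq_append_conv2)

definition Eset :: "'a stree \<Rightarrow> 'a \<Rightarrow> nat \<Rightarrow> nat list set" where
  "Eset S w k = {l \<in> paths S. \<exists>p\<in>sits_in S w. \<exists>q. l = p @ k # q}"

lemma n_cnt_E: "n_cnt S N w k = (\<Sum>l\<in>Eset S w k. real (N l))"
  by (simp add: n_cnt_def Eset_def)

lemma alpha_E:
  assumes "square_free S"
  shows "alpha_jk S \<alpha> w k = \<alpha> / real (card (paths S)) * real (card (Eset S w k))"
proof -
  have E: "Eset S w k = (\<Union>p\<in>sits_in S w. paths_edge S p k)"
    by (auto simp: Eset_def paths_edge_def)
  have disj: "paths_edge S p k \<inter> paths_edge S p' k = {}"
    if pin: "p \<in> sits_in S w" "p' \<in> sits_in S w" and pne: "p \<noteq> p'" for p p'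
  proof (rule ccontr)
    assume "paths_edge S p k \<inter> paths_edge S p' k \<noteq> {}"
    then obtain q q' where eq: "p @ k # q = p' @ k # q'" by (auto simp: paths_edge_def)
    obtain n n' where n: "ni S p = Some (Some (w, n))" "ni S p' = Some (Some (w, n'))"
      using pin by (auto simp: sits_in_ni)
    from eq have "(\<exists>r. p' = p @ r) \<or> (\<exists>r. p = p' @ r)"
      by (rule app_cases)
    then show False
    proof
      assume "\<exists>r. p' = p @ r"
      then obtain r where r: "p' = p @ r" by blast
      with pne have rne: "r \<noteq> []" by auto
      show False using sf_D[OF assms rne n(1)] n(2) unfolding r by blast
    next
      assume "\<exists>r. p = p' @ r"
      then obtain r where r: "p = p' @ r" by blast
      with pne have rne: "r \<noteq> []" by auto
      show False using sf_D[OF assms rne n(2)] n(1) unfolding r by blast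
    qed
  qed
  have fin: "\<And>p. finite (paths_edge S p k)"
    by (rule finite_subset[OF _ finite_paths[of S]]) (auto simp: paths_edge_def)
  have "card (Eset S w k) = (\<Sum>p\<in>sits_in S w. card (paths_edge S p k))"
    unfolding E by (rule card_UN_disjoint[OF finite_sits]) (simp_all add: fin disj)
  then have "real (card (Eset S w k)) = (\<Sum>p\<in>sits_in S w. real (card (paths_edge S p k)))"
    by (simp only: of_nat_sum)
  then show ?thesis unfolding alpha_jk_def by simp
qed


lemma sp_eq[simp]: "swap_path p (p @ i # j # q) = p @ j # i # q"
  by (auto simp: swap_path_def nth_append)

lemma sp_id: "\<not> (\<exists>i j q. l = p @ i # j # q) \<Longrightarrow> swap_path p l = l"
  by (simp add: swap_path_def)

lemma sp_inv[simp]: "swap_path p (swap_path p l) = l"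
proof (cases "\<exists>i j q. l = p @ i # j # q")
  case True
  then show ?thesis by auto
next
  case False
  then show ?thesis by (simp add: sp_id)
qed

lemma sp_inj: "inj_on (swap_path p) A"
  by (metis inj_on_inverseI sp_inv)

lemma sp_take:
  assumes "length y \<le> length p" "l = y @ q"
  shows "\<exists>q'. swap_path p l = y @ q'"
proof (cases "\<exists>i j q. l = p @ i # j # q")
  case True
  then obtain i j q0 where l: "l = p @ i # j # q0" by blast
  have "take (length y) l = y" using assms by simp
  then have "take (length y) p = y" using assms(1) l by simp
  then have "p = y @ drop (length y) p" by (metis append_take_drop_id)
  then show ?thesis using l by (metis append.assoc sp_eq)
next
  case False
  then show ?thesis using assms by (simp add: sp_id)
qed

lemma pos_cases:
  obtains "x = p" | i where "x = p @ [i]" | i j z where "x = p @ i # j # z" | "\<not> (\<exists>r. x = p @ r)"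
proof -
  consider "\<exists>r. x = p @ r" | "\<not> (\<exists>r. x = p @ r)" by blast
  then show ?thesis
  proof cases
    case 1
    then obtain r where r: "x = p @ r" by blast
    show ?thesis
    proof (cases r)
      case Nil then show ?thesis using r that by simp
    next
      case (Cons i r')
      then show ?thesis using r that by (cases r') auto
    qed
  next
    case 2 then show ?thesis using that by blast
  qed
qed

definition swap_rel :: "'a stree \<Rightarrow> 'a stree \<Rightarrow> nat list \<Rightarrow> 'a \<Rightarrow> 'a \<Rightarrow> nat \<Rightarrow> nat \<Rightarrow> bool" where
  "swap_rel T T' p u v r1 r2 \<longleftrightarrow> 0 < r1 \<and> 0 < r2 \<and>
     ni T p = Some (Some (v, r1)) \<and> ni T' p = Some (Some (u, r2)) \<and>
     (\<forall>i. ni T (p @ [i]) = (if i < r1 then Some (Some (u, r2)) else None)) \<and>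
     (\<forall>i. ni T' (p @ [i]) = (if i < r2 then Some (Some (v, r1)) else None)) \<and>
     (\<forall>i j z. ni T' (p @ i # j # z) = ni T (p @ j # i # z)) \<and>
     (\<forall>x. \<not> (\<exists>r. x = p @ r) \<longrightarrow> ni T' x = ni T x)"

lemma swap_rel_sym:
  assumes h: "swap_rel T T' p u v r1 r2"
  shows "swap_rel T' T p v u r2 r1"
proof -
  have a: "0 < r1 \<and> 0 < r2 \<and>
     ni T p = Some (Some (v, r1)) \<and> ni T' p = Some (Some (u, r2)) \<and>
     (\<forall>i. ni T (p @ [i]) = (if i < r1 then Some (Some (u, r2)) else None)) \<and>
     (\<forall>i. ni T' (p @ [i]) = (if i < r2 then Some (Some (v, r1)) else None)) \<and>
     (\<forall>i j z. ni T' (p @ i # j # z) = ni T (p @ j # i # z)) \<and>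
     (\<forall>x. \<not> (\<exists>r. x = p @ r) \<longrightarrow> ni T' x = ni T x)"
    using h unfolding swap_rel_def .
  have d: "\<forall>i j z. ni T' (p @ i # j # z) = ni T (p @ j # i # z)" using a by (elim conjE)
  have o: "\<forall>x. \<not> (\<exists>r. x = p @ r) \<longrightarrow> ni T' x = ni T x" using a by (elim conjE)
  have d': "\<forall>i j z. ni T (p @ i # j # z) = ni T' (p @ j # i # z)"
  proof (intro allI)
    fix i j z show "ni T (p @ i # j # z) = ni T' (p @ j # i # z)" using spec[OF spec[OF spec[OF d, of j], of i], of z] by (rule sym)
  qed
  have o': "\<forall>x. \<not> (\<exists>r. x = p @ r) \<longrightarrow> ni T x = ni T' x"
  proof (intro allI impI)
    fix x assume "\<not> (\<exists>r. x = p @ r)"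
    with spec[OF o, of x] have "ni T' x = ni T x" by (rule mp)
    then show "ni T x = ni T' x" by (rule sym)
  qed
  show ?thesis unfolding swap_rel_def using a d' o' by (elim conjE) (intro conjI)
qed

lemma ni_Some_pre:
  assumes "ni S (x @ y) \<noteq> None"
  shows "ni S x \<noteq> None"
proof
  assume "ni S x = None"
  then have "ni S (x @ y) = None" by (rule ni_None_app)
  with assms show False by contradiction
qed

context
  fixes T T' p u v r1 r2
  assumes R: "swap_rel T T' p u v r1 r2"
begin

lemma R_all: "0 < r1 \<and> 0 < r2 \<and>
     ni T p = Some (Some (v, r1)) \<and> ni T' p = Some (Some (u, r2)) \<and>
     (\<forall>i. ni T (p @ [i]) = (if i < r1 then Some (Some (u, r2)) else None)) \<and>
     (\<forall>i. ni T' (p @ [i]) = (if i < r2 then Some (Some (v, r1)) else None)) \<and>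
     (\<forall>i j z. ni T' (p @ i # j # z) = ni T (p @ j # i # z)) \<and>
     (\<forall>x. \<not> (\<exists>r. x = p @ r) \<longrightarrow> ni T' x = ni T x)"
  using R unfolding swap_rel_def .
lemma R_r1: "0 < r1" using R_all by (elim conjE)
lemma R_r2: "0 < r2" using R_all by (elim conjE)
lemma R_p: "ni T p = Some (Some (v, r1))" using R_all by (elim conjE)
lemma R_p': "ni T' p = Some (Some (u, r2))" using R_all by (elim conjE)
lemma R_c_all: "\<forall>i. ni T (p @ [i]) = (if i < r1 then Some (Some (u, r2)) else None)"
  using R_all by (elim conjE)
lemma R_c'_all: "\<forall>i. ni T' (p @ [i]) = (if i < r2 then Some (Some (v, r1)) else None)"
  using R_all by (elim conjE)
lemma R_d_all: "\<forall>i j z. ni T' (p @ i # j # z) = ni T (p @ j # i # z)"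
  using R_all by (elim conjE)
lemma R_o_all: "\<forall>x. \<not> (\<exists>r. x = p @ r) \<longrightarrow> ni T' x = ni T x"
  using R_all by (elim conjE)
lemma R_c: "ni T (p @ [i]) = (if i < r1 then Some (Some (u, r2)) else None)"
  using R_c_all by (rule spec)
lemma R_c': "ni T' (p @ [i]) = (if i < r2 then Some (Some (v, r1)) else None)"
  using R_c'_all by (rule spec)
lemma R_d: "ni T' (p @ i # j # z) = ni T (p @ j # i # z)"
  using spec[OF spec[OF spec[OF R_d_all, of i], of j], of z] .
lemma R_o: "\<not> (\<exists>r. x = p @ r) \<Longrightarrow> ni T' x = ni T x"
  using mp[OF spec[OF R_o_all, of x]] .

lemma P1:
  assumes "l \<in> paths T'"
  shows "swap_path p l \<in> paths T"
proof -
  have a: "ni T' l = Some None" using assms by (simp add: paths_ni)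
  have "ni T (swap_path p l) = Some None"
  proof (cases l p rule: pos_cases)
    case 1 then show ?thesis using a R_p' by simp
  next
    case (2 i) then show ?thesis using a R_c'[of i] by (simp split: if_splits)
  next
    case (3 i j z) then show ?thesis using a R_d by simp
  next
    case 4
    then have "\<not> (\<exists>i j q. l = p @ i # j # q)" by auto
    then show ?thesis using a R_o[OF 4] sp_id by metis
  qed
  then show ?thesis by (simp add: paths_ni)
qed

lemma P2: "ni T' x = Some (Some (w, n)) \<Longrightarrow> \<exists>x'. ni T x' = Some (Some (w, n))"
proof (cases x p rule: pos_cases)
  case 1 then show "ni T' x = Some (Some (w, n)) \<Longrightarrow> ?thesis" using R_p' R_c[of 0] R_r1 by auto
next
  case (2 i) then show "ni T' x = Some (Some (w, n)) \<Longrightarrow> ?thesis" using R_c'[of i] R_p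
    by (auto split: if_splits)
next
  case (3 i j z) then show "ni T' x = Some (Some (w, n)) \<Longrightarrow> ?thesis" using R_d by auto
next
  case 4 then show "ni T' x = Some (Some (w, n)) \<Longrightarrow> ?thesis" using R_o[of x] by auto
qed

lemma P3:
  assumes "l \<in> Eset T' w k"
  shows "swap_path p l \<in> Eset T w k"
proof -
  from assms obtain x q n where l: "l \<in> paths T'" "l = x @ k # q" and x: "ni T' x = Some (Some (w, n))"
    by (auto simp: Eset_def sits_in_ni)
  have sl: "swap_path p l \<in> paths T" using P1 l(1) .
  have "\<exists>x' q' n'. ni T x' = Some (Some (w, n')) \<and> swap_path p l = x' @ k # q'"
  proof (cases x p rule: pos_cases)
    case 1
    have "q \<noteq> []"
    proof
      assume "q = []"
      then show False using l R_c'[of k] 1 by (auto simp: paths_ni split: if_splits)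
    qed
    then obtain i q0 where q: "q = i # q0" by (cases q) auto
    have "swap_path p l = (p @ [i]) @ k # q0" using l 1 q by simp
    with sl have "ni T ((p @ [i]) @ k # q0) \<noteq> None" by (simp add: paths_ni)
    then have "ni T (p @ [i]) \<noteq> None" by (rule ni_Some_pre)
    then have "ni T (p @ [i]) = Some (Some (u, r2))" using R_c[of i] by (simp split: if_splits)
    moreover have "w = u" using x 1 R_p' by simp
    ultimately show ?thesis using \<open>swap_path p l = (p @ [i]) @ k # q0\<close> by blast
  next
    case (2 i)
    have "w = v" using x 2 R_c'[of i] by (simp split: if_splits)
    moreover have "swap_path p l = p @ k # i # q" using l 2 by simp
    ultimately show ?thesis using R_p by blast
  next
    case (3 i j z)
    have "swap_path p l = (p @ j # i # z) @ k # q" using l 3 by simp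
    moreover have "ni T (p @ j # i # z) = Some (Some (w, n))" using x 3 R_d by simp
    ultimately show ?thesis by blast
  next
    case 4
    have xT: "ni T x = Some (Some (w, n))" using x R_o[OF 4] by simp
    show ?thesis
    proof (cases "\<exists>i j q0. l = p @ i # j # q0")
      case True
      then obtain i j q0 where "x @ k # q = p @ i # j # q0" using l by auto
      then obtain us where "(x = p @ us \<and> us @ k # q = i # j # q0) \<or> (x @ us = p \<and> k # q = us @ i # j # q0)"
        by (auto simp: append_eq_append_conv2)
      with 4 have "x @ us = p" "us \<noteq> []" by auto
      then have "length (x @ [k]) \<le> length p" by (cases us) auto
      from sp_take[OF this, of l q] l obtain q' where "swap_path p l = (x @ [k]) @ q'" by auto
      then show ?thesis using xT by auto
    next
      case False
      then show ?thesis using sp_id[OF False] l xT by blast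
    qed
  qed
  then show ?thesis using sl by (auto simp: Eset_def sits_in_ni)
qed

lemma R_uv: "square_free T \<Longrightarrow> u \<noteq> v"
  using sf_D[of T "[0]" p v r1 r2] R_p R_c[of 0] R_r1 by auto

lemma P4:
  assumes sf: "square_free T"
  shows "square_free T'"
  unfolding square_free_ni
proof (intro allI impI)
  fix x r w n m
  assume rne: "r \<noteq> []" and x: "ni T' x = Some (Some (w, n))" and y: "ni T' (x @ r) = Some (Some (w, m))"
  have uv: "u \<noteq> v" using R_uv sf .
  show False
  proof (cases x p rule: pos_cases)
    case 1
    then have w: "w = u" using x R_p' by simp
    show False
    proof (cases r)
      case Nil then show False using rne by simp
    next
      case (Cons i r')
      show False
      proof (cases r')
        case Nil
        then show False using y 1 Cons R_c'[of i] w uv by (simp split: if_splits)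
      next
        case (Cons j z)
        have yT: "ni T ((p @ [j]) @ i # z) = Some (Some (u, m))"
          using y 1 \<open>r = i # r'\<close> Cons R_d w by simp
        then have "ni T (p @ [j]) \<noteq> None" using ni_Some_pre by (metis option.distinct(1))
        then have "ni T (p @ [j]) = Some (Some (u, r2))" using R_c[of j] by (simp split: if_splits)
        from sf_D[OF sf _ this yT] show False by simp
      qed
    qed
  next
    case (2 i)
    then have w: "w = v" using x R_c'[of i] by (simp split: if_splits)
    obtain j z where r: "r = j # z" using rne by (cases r) auto
    have "ni T (p @ j # i # z) = Some (Some (v, m))" using y 2 r R_d w by simp
    from sf_D[OF sf _ R_p this] show False by simp
  next
    case (3 i j z)
    have a: "ni T (p @ j # i # z) = Some (Some (w, n))" using x 3 R_d by simp
    have "ni T ((p @ j # i # z) @ r) = Some (Some (w, m))" using y 3 R_d by simp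
    from sf_D[OF sf rne a this] show False .
  next
    case 4
    have xT: "ni T x = Some (Some (w, n))" using x R_o[OF 4] by simp
    show False
    proof (cases "x @ r" p rule: pos_cases)
      case 1
      then have "w = u" using y R_p' by simp
      have "x @ (r @ [0]) = p @ [0]" using 1 by (metis append.assoc)
      then have "ni T (x @ (r @ [0])) = ni T (p @ [0])" by (simp only:)
      then have "ni T (x @ (r @ [0])) = Some (Some (w, r2))" using R_c[of 0] R_r1 \<open>w = u\<close> by simp
      from sf_D[OF sf _ xT this] show False by simp
    next
      case (2 i)
      then obtain us where "(x = p @ us \<and> us @ r = [i]) \<or> (x @ us = p \<and> r = us @ [i])"
        by (auto simp: append_eq_append_conv2)
      with 4 have us: "x @ us = p" by auto
      with 4 have "us \<noteq> []" by auto
      have "w = v" using y 2 R_c'[of i] by (simp split: if_splits)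
      then have "ni T (x @ us) = Some (Some (w, r1))" using us R_p by simp
      from sf_D[OF sf \<open>us \<noteq> []\<close> xT this] show False .
    next
      case (3 i j z)
      then obtain us where "(x = p @ us \<and> us @ r = i # j # z) \<or> (x @ us = p \<and> r = us @ i # j # z)"
        by (auto simp: append_eq_append_conv2)
      with 4 have us: "x @ us = p" by auto
      have e: "p @ j # i # z = x @ (us @ j # i # z)" using us[symmetric] by simp
      have "ni T' (p @ i # j # z) = Some (Some (w, m))" using y 3 by simp
      then have "ni T (p @ j # i # z) = Some (Some (w, m))" using R_d by simp
      then have "ni T (x @ (us @ j # i # z)) = Some (Some (w, m))" by (simp only: e)
      from sf_D[OF sf _ xT this] show False by simp
    next
      case 4
      have "ni T (x @ r) = Some (Some (w, m))" using y R_o[OF 4] by simp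
      from sf_D[OF sf rne xT this] show False .
    qed
  qed
qed

lemma P5:
  assumes st: "staged_tree T"
  shows "staged_tree T'"
  unfolding staged_tree_ni
proof (intro conjI allI impI)
  fix x w n assume "ni T' x = Some (Some (w, n))"
  then obtain x' where "ni T x' = Some (Some (w, n))" using P2 by blast
  then show "0 < n" using st unfolding staged_tree_ni by blast
next
  fix x y w n m assume a: "ni T' x = Some (Some (w, n))" "ni T' y = Some (Some (w, m))"
  obtain x' where "ni T x' = Some (Some (w, n))" using P2 a(1) by blast
  moreover obtain y' where "ni T y' = Some (Some (w, m))" using P2 a(2) by blast
  ultimately show "n = m" using st unfolding staged_tree_ni by blast
qed

end


lemma stage_r_eq:
  assumes st: "staged_tree S" and x: "ni S x = Some (Some (w, n))"
  shows "stage_r S w = n"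
proof -
  have xin: "x \<in> sits_in S w" using x by (auto simp: sits_in_ni)
  define y where "y = (SOME p. p \<in> sits_in S w)"
  have "y \<in> sits_in S w" unfolding y_def using xin by (rule someI)
  then obtain n' where y: "ni S y = Some (Some (w, n'))" by (auto simp: sits_in_ni)
  have "n' = n" using st y x unfolding staged_tree_ni by blast
  then show ?thesis unfolding stage_r_def y_def[symmetric] nch_ni using y by simp
qed

lemma BDepu_N_cong:
  assumes "\<forall>l\<in>paths S. N' l = N l"
  shows "BDepu S N \<alpha> = BDepu S N' \<alpha>"
proof -
  have "n_cnt S N' w k = n_cnt S N w k" for w k
    unfolding n_cnt_E by (rule sum.cong) (use assms in \<open>auto simp: Eset_def\<close>)
  then show ?thesis unfolding BDepu_def by simp
qed

lemma rel_BDepu: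
  assumes R: "swap_rel T T' p u v r1 r2" and st: "staged_tree T" and sf: "square_free T"
  shows "BDepu T N \<alpha> = BDepu T' (\<lambda>l. N (swap_path p l)) \<alpha>"
proof -
  have R': "swap_rel T' T p v u r2 r1" using R by (rule swap_rel_sym)
  have sf': "square_free T'" using P4[OF R sf] .
  have paths_eq: "paths T' = swap_path p ` paths T"
  proof
    show "paths T' \<subseteq> swap_path p ` paths T"
    proof
      fix l assume "l \<in> paths T'"
      then have "swap_path p l \<in> paths T" by (rule P1[OF R])
      then show "l \<in> swap_path p ` paths T" by (rule image_eqI[rotated]) simp
    qed
  next
    show "swap_path p ` paths T \<subseteq> paths T'"
      using P1[OF R'] by blast
  qed
  have E_eq: "Eset T' w k = swap_path p ` Eset T w k" for w k
  proof
    show "Eset T' w k \<subseteq> swap_path p ` Eset T w k"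
    proof
      fix l assume "l \<in> Eset T' w k"
      then have "swap_path p l \<in> Eset T w k" by (rule P3[OF R])
      then show "l \<in> swap_path p ` Eset T w k" by (rule image_eqI[rotated]) simp
    qed
  next
    show "swap_path p ` Eset T w k \<subseteq> Eset T' w k"
      using P3[OF R'] by blast
  qed
  have cp: "card (paths T') = card (paths T)"
    unfolding paths_eq by (rule card_image[OF sp_inj])
  have cE: "card (Eset T' w k) = card (Eset T w k)" for w k
    unfolding E_eq by (rule card_image[OF sp_inj])
  have alpha_eq: "alpha_jk T' \<alpha> w k = alpha_jk T \<alpha> w k" for w k
    unfolding alpha_E[OF sf] alpha_E[OF sf'] cp cE ..
  have n_eq: "n_cnt T' (\<lambda>l. N (swap_path p l)) w k = n_cnt T N w k" for w k
  proof -
    have "n_cnt T' (\<lambda>l. N (swap_path p l)) w k = (\<Sum>l\<in>swap_path p ` Eset T w k. real (N (swap_path p l)))"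
      unfolding n_cnt_E E_eq ..
    also have "\<dots> = (\<Sum>l\<in>Eset T w k. real (N (swap_path p (swap_path p l))))"
      by (subst sum.reindex[OF sp_inj]) simp
    also have "\<dots> = n_cnt T N w k" unfolding n_cnt_E by simp
    finally show ?thesis .
  qed
  have stages_eq: "stages T' = stages T"
  proof
    show "stages T' \<subseteq> stages T"
      using P2[OF R] unfolding stages_ni by blast
  next
    show "stages T \<subseteq> stages T'"
      using P2[OF R'] unfolding stages_ni by blast
  qed
  have str_eq: "stage_r T' w = stage_r T w" if "w \<in> stages T" for w
  proof -
    have "\<exists>x n. ni T x = Some (Some (w, n))" using that by (simp add: stages_ni)
    then obtain x n where x: "ni T x = Some (Some (w, n))" by blast
    obtain x' where x': "ni T' x' = Some (Some (w, n))" using P2[OF R' x] by blast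
    show ?thesis using stage_r_eq[OF st x] stage_r_eq[OF P5[OF R st] x'] by simp
  qed
  show ?thesis
    unfolding BDepu_def stages_eq
    by (intro prod.cong refl) (simp add: str_eq alpha_eq n_eq)
qed

lemma ni_Nil: "ni t [] = (case t of Leaf \<Rightarrow> Some None | Sit u cs \<Rightarrow> Some (Some (u, length cs)))"
  by (simp add: ni_def split: stree.splits)

lemma ni_Sit_Cons: "ni (Sit u cs) (j # x) = (if j < length cs then ni (cs ! j) x else None)"
  by (simp add: ni_def)

lemma ni_sub: "subtree S p = Some t \<Longrightarrow> ni S (p @ y) = ni t y"
  by (simp add: ni_def subtree_append)

lemma upd_at_sub: "subtree S p = Some t \<Longrightarrow> subtree (upd_at p f S) (p @ y) = subtree (f t) y"
proof (induction p arbitrary: S)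
  case Nil then show ?case by simp
next
  case (Cons i p')
  show ?case
  proof (cases S)
    case Leaf then show ?thesis using Cons.prems by simp
  next
    case (Sit u cs)
    then have i: "i < length cs" and s: "subtree (cs ! i) p' = Some t"
      using Cons.prems by (auto split: if_splits)
    then show ?thesis using Sit Cons.IH[OF s] by simp
  qed
qed

lemma upd_at_other: "\<not> (\<exists>r. x = p @ r) \<Longrightarrow> ni (upd_at p f S) x = ni S x"
proof (induction p arbitrary: S x)
  case Nil then show ?case by simp
next
  case (Cons i p')
  show ?case
  proof (cases S)
    case Leaf then show ?thesis by simp
  next
    case (Sit u cs)
    show ?thesis
    proof (cases "i < length cs")
      case False then show ?thesis using Sit by simp
    next
      case True
      show ?thesis
      proof (cases x)
        case Nil then show ?thesis using Sit True by (simp add: ni_Nil)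
      next
        case (Cons j x')
        show ?thesis
        proof (cases "j = i")
          case True
          then have "\<not> (\<exists>r. x' = p' @ r)" using Cons.prems \<open>x = j # x'\<close> by auto
          then show ?thesis using Sit \<open>i < length cs\<close> \<open>x = j # x'\<close> True Cons.IH
            by (simp add: ni_Sit_Cons)
        next
          case False
          then show ?thesis using Sit \<open>i < length cs\<close> \<open>x = j # x'\<close>
            by (simp add: ni_Sit_Cons)
        qed
      qed
    qed
  qed
qed

lemma swap_rel_upd:
  assumes st: "staged_tree S" and sub: "subtree S p = Some t" and tw: "is_twin t"
  shows "\<exists>u v r1 r2. swap_rel S (upd_at p swap_twin S) p u v r1 r2"
proof -
  obtain v cs u r2 where t: "t = Sit v cs" and cne: "cs \<noteq> []"
    and ch: "\<forall>c\<in>set cs. \<exists>ds. c = Sit u ds \<and> length ds = r2"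
    using tw unfolding is_twin_def by blast
  obtain ds0 where c0: "cs ! 0 = Sit u ds0" "length ds0 = r2"
    using ch cne by (meson nth_mem length_greater_0_conv)
  have "subtree S (p @ [0]) = Some (Sit u ds0)"
    using sub t c0 cne by (simp add: subtree_append)
  then have r2: "0 < r2" using st c0 unfolding staged_tree_def by blast
  define r1 where "r1 = length cs"
  have r1: "0 < r1" using cne r1_def by simp
  have hd: "hd cs = cs ! 0" using cne by (simp add: hd_conv_nth)
  have sw: "swap_twin t = Sit u (map (\<lambda>i. Sit v (map (\<lambda>c. kids c ! i) cs)) [0..<r2])"
    unfolding swap_twin_def t using hd c0 by simp
  define S' where "S' = upd_at p swap_twin S"
  have s'sub: "ni S' (p @ y) = ni (swap_twin t) y" for y
    unfolding S'_def ni_def using upd_at_sub[OF sub] by simp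
  have ssub: "ni S (p @ y) = ni t y" for y using ni_sub[OF sub] .
  have chi: "cs ! j = Sit u (kids (cs ! j))" "length (kids (cs ! j)) = r2" if jr: "j < r1" for j
  proof -
    have "cs ! j \<in> set cs" using jr r1_def by simp
    then obtain ds where "cs ! j = Sit u ds" "length ds = r2" using ch by blast
    then show "cs ! j = Sit u (kids (cs ! j))" "length (kids (cs ! j)) = r2" by auto
  qed
  have A: "ni S p = Some (Some (v, r1))" using ssub[of "[]"] t r1_def by (simp add: ni_Nil)
  have B: "ni S' p = Some (Some (u, r2))" using s'sub[of "[]"] sw by (simp add: ni_Nil)
  have C: "ni S (p @ [i]) = (if i < r1 then Some (Some (u, r2)) else None)" for i
  proof (cases "i < r1")
    case True
    then show ?thesis using ssub[of "[i]"] t r1_def chi[OF True] by (simp add: ni_Sit_Cons) (metis ni_Nil stree.simps(5))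
  next
    case False
    then show ?thesis using ssub[of "[i]"] t r1_def by (simp add: ni_Sit_Cons)
  qed
  have D: "ni S' (p @ [i]) = (if i < r2 then Some (Some (v, r1)) else None)" for i
    using s'sub[of "[i]"] sw r1_def by (simp add: ni_Sit_Cons ni_Nil)
  have E: "ni S' (p @ i # j # z) = ni S (p @ j # i # z)" for i j z
  proof -
    have "ni S' (p @ i # j # z) = ni (swap_twin t) (i # j # z)" by (rule s'sub)
    also have "\<dots> = ni t (j # i # z)"
    proof (cases "j < r1")
      case True
      then have "cs ! j \<in> set cs" using r1_def by simp
      then obtain ds where ds: "cs ! j = Sit u ds" "length ds = r2" using ch by blast
      show ?thesis
      proof (cases "i < r2")
        case True
        then show ?thesis using sw t r1_def ds \<open>j < r1\<close> by (simp add: ni_Sit_Cons)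
      next
        case False
        then show ?thesis using sw t r1_def ds \<open>j < r1\<close> by (simp add: ni_Sit_Cons)
      qed
    next
      case False
      then show ?thesis using sw t r1_def by (simp add: ni_Sit_Cons)
    qed
    also have "\<dots> = ni S (p @ j # i # z)" by (rule ssub[symmetric])
    finally show ?thesis .
  qed
  have F: "\<not> (\<exists>r. x = p @ r) \<Longrightarrow> ni S' x = ni S x" for x
    unfolding S'_def by (rule upd_at_other)
  have "swap_rel S S' p u v r1 r2"
    unfolding swap_rel_def using r1 r2 A B C D E F by blast
  then show ?thesis unfolding S'_def by blast
qed

lemma main:
  assumes "staged_tree S" "square_free S" "valid_swaps ps S"
    "\<forall>l\<in>paths S. N' (swap_op_path ps l) = N l"
  shows "BDepu S N \<alpha> = BDepu (swap_op ps S) N' \<alpha>"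
  using assms
proof (induction ps arbitrary: S N)
  case Nil
  then show ?case using BDepu_N_cong[of S N' N] by simp
next
  case (Cons p ps)
  obtain t where sub: "subtree S p = Some t" and tw: "is_twin t" and vs: "valid_swaps ps (upd_at p swap_twin S)"
    using Cons.prems(3) by auto
  define S1 where "S1 = upd_at p swap_twin S"
  obtain u v r1 r2 where R: "swap_rel S S1 p u v r1 r2"
    using swap_rel_upd[OF Cons.prems(1) sub tw] unfolding S1_def by blast
  have e1: "BDepu S N \<alpha> = BDepu S1 (\<lambda>l. N (swap_path p l)) \<alpha>"
    by (rule rel_BDepu[OF R Cons.prems(1) Cons.prems(2)])
  have h: "\<forall>l\<in>paths S1. N' (swap_op_path ps l) = N (swap_path p l)"
  proof
    fix l assume "l \<in> paths S1"
    then have "swap_path p l \<in> paths S" by (rule P1[OF R])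
    then have "N' (swap_op_path (p # ps) (swap_path p l)) = N (swap_path p l)" using Cons.prems(4) by blast
    then show "N' (swap_op_path ps l) = N (swap_path p l)" by simp
  qed
  have "BDepu S1 (\<lambda>l. N (swap_path p l)) \<alpha> = BDepu (swap_op ps S1) N' \<alpha>"
    by (rule Cons.IH[OF P5[OF R Cons.prems(1)] P4[OF R Cons.prems(2)] vs[folded S1_def] h])
  then show ?case using e1 unfolding S1_def by simp
qed


theorem lemma2:
  fixes S :: "'a stree" and ps :: "nat list list" and N N' :: "nat list \<Rightarrow> nat"
    and \<alpha> :: real
  assumes "staged_tree S" and "square_free S"
    and "valid_swaps ps S"
    and "\<alpha> > 0"
    and "\<forall>l\<in>paths S. N' (swap_op_path ps l) = N l"
  shows "BDepu S N \<alpha> = BDepu (swap_op ps S) N' \<alpha>"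
  using main[OF assms(1,2,3,5)] .

end
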